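(* Let $E=\{(s_q,t_q):q\in\omega\}$ be a test and let $T$ be the tree generated by $E$. Then $T$ is a tree with acyclic levels.
   Context: Let $\varphi:\omega\to\omega^2$ be the bijection with inverse $\langle n,p\rangle:=\varphi^{-1}(n,p)=\left(\sum_{k\leq n+p}k\right)+p$, and write $\varphi(q)=((q)_0,(q)_1)$. A set $E\subseteq\bigcup_{q\in\omega}2^q\times 2^q$ is a test if: (a) for each $q\in\omega$ there is a unique $(s_q,t_q)\in E\cap(2^q\times 2^q)$; (b) for all $m,p\in\omega$ and $u\in 2^{<\omega}$ there is $v\in 2^{<\omega}$ with $(s_p0uv,t_p1uv)\in E$ and $(|t_p1uv|-1)_0=m$; (c) for each $n>0$ there are $q<n$ and $w\in 2^{<\omega}$ with $s_n=s_q0w$ and $t_n=t_q1w$. (Juxtaposition denotes concatenation of finite binary sequences.) The tree generated by $E$ is $T:=\{(s,t)\in 2^{<\omega}\times 2^{<\omega}: s=t=\emptyset$ or $\exists q\in\omega\ \exists w\in 2^{<\omega}\ (s,t)=(s_q0w,t_q1w)\}$. A tree $T$ on $2\times 2$ has acyclic levels if for each $p$ the bipartite graph with vertex set $\{(s,0):s\in 2^p\}\cup\{(t,1):t\in 2^p\}$ and edges $\{(s,0),(t,1)\}$ for $(s,t)\in T\cap(2^p\times 2^p)$ is acyclic. *)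

theory Defs
  imports Main
begin

text \<open>Finite binary sequences are \<open>bool list\<close>; False = 0, True = 1.
  The set 2^q is the set of lists of length q.\<close>

definition pair_code :: "nat \<Rightarrow> nat \<Rightarrow> nat" where
  "pair_code n p = (\<Sum>k\<le>n+p. k) + p"

definition pair_decode :: "nat \<Rightarrow> nat \<times> nat" where
  "pair_decode q = (THE np. pair_code (fst np) (snd np) = q)"

definition sq :: "(bool list \<times> bool list) set \<Rightarrow> nat \<Rightarrow> bool list" where
  "sq E q = fst (THE x. x \<in> E \<and> length (fst x) = q \<and> length (snd x) = q)"

definition tq :: "(bool list \<times> bool list) set \<Rightarrow> nat \<Rightarrow> bool list" where
  "tq E q = snd (THE x. x \<in> E \<and> length (fst x) = q \<and> length (snd x) = q)"

definition is_test :: "(bool list \<times> bool list) set \<Rightarrow> bool" where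
  "is_test E \<longleftrightarrow>
     (\<forall>x\<in>E. length (fst x) = length (snd x)) \<and>
     (\<forall>q. \<exists>!x. x \<in> E \<and> length (fst x) = q \<and> length (snd x) = q) \<and>
     (\<forall>m p u. \<exists>v. (sq E p @ [False] @ u @ v, tq E p @ [True] @ u @ v) \<in> E \<and>
                   fst (pair_decode (length (tq E p @ [True] @ u @ v) - 1)) = m) \<and>
     (\<forall>n>0. \<exists>q<n. \<exists>w. sq E n = sq E q @ [False] @ w \<and> tq E n = tq E q @ [True] @ w)"

definition generated_tree :: "(bool list \<times> bool list) set \<Rightarrow> (bool list \<times> bool list) set" where
  "generated_tree E = {(s, t). (s = [] \<and> t = []) \<or>
       (\<exists>q w. s = sq E q @ [False] @ w \<and> t = tq E q @ [True] @ w)}"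

definition is_tree_22 :: "(bool list \<times> bool list) set \<Rightarrow> bool" where
  "is_tree_22 T \<longleftrightarrow> (\<forall>(s, t)\<in>T. length s = length t \<and>
       (\<forall>k\<le>length s. (take k s, take k t) \<in> T))"

text \<open>Edges of the bipartite graph of level p: vertices (s,False) ~ (s,0), (t,True) ~ (t,1).\<close>
definition level_edges :: "(bool list \<times> bool list) set \<Rightarrow> nat \<Rightarrow> (bool list \<times> bool) set set" where
  "level_edges T p = {{(s, False), (t, True)} | s t. (s, t) \<in> T \<and> length s = p \<and> length t = p}"

definition ugraph_acyclic :: "'v set set \<Rightarrow> bool" where
  "ugraph_acyclic Ed \<longleftrightarrow> \<not> (\<exists>cs. length cs \<ge> 3 \<and> distinct cs \<and>
      (\<forall>i<length cs. {cs ! i, cs ! ((i + 1) mod length cs)} \<in> Ed))"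

definition has_acyclic_levels :: "(bool list \<times> bool list) set \<Rightarrow> bool" where
  "has_acyclic_levels T \<longleftrightarrow> (\<forall>p. ugraph_acyclic (level_edges T p))"

end

theory Submission
  imports Defs
begin

lemma sqtq:
  assumes "is_test E"
  shows "(sq E q, tq E q) \<in> E \<and> length (sq E q) = q \<and> length (tq E q) = q"
proof -
  have u: "\<exists>!x. x \<in> E \<and> length (fst x) = q \<and> length (snd x) = q"
    using assms unfolding is_test_def by blast
  have "(THE x. x \<in> E \<and> length (fst x) = q \<and> length (snd x) = q) \<in> E \<and>
        length (fst (THE x. x \<in> E \<and> length (fst x) = q \<and> length (snd x) = q)) = q \<and>
        length (snd (THE x. x \<in> E \<and> length (fst x) = q \<and> length (snd x) = q)) = q"
    using theI'[OF u] by blast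
  then show ?thesis unfolding sq_def tq_def by simp
qed

lemma testc:
  assumes "is_test E" "n > 0"
  shows "\<exists>q<n. \<exists>w. sq E n = sq E q @ [False] @ w \<and> tq E n = tq E q @ [True] @ w"
  using assms unfolding is_test_def by blast

lemma gen_in: "(sq E q @ [False] @ w, tq E q @ [True] @ w) \<in> generated_tree E"
  unfolding generated_tree_def by blast

lemma gen_nil: "([], []) \<in> generated_tree E"
  unfolding generated_tree_def by blast

lemma prefix_sq:
  assumes "is_test E"
  shows "\<forall>k\<le>q. (take k (sq E q), take k (tq E q)) \<in> generated_tree E"
proof (induction q rule: less_induct)
  case (less q)
  show ?case
  proof (cases "q = 0")
    case True
    then have "sq E q = []" "tq E q = []" using sqtq[OF assms, of q] by auto
    then show ?thesis using gen_nil by simp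
  next
    case False
    then obtain q' w where q': "q' < q" "sq E q = sq E q' @ [False] @ w"
        "tq E q = tq E q' @ [True] @ w"
      using testc[OF assms, of q] by auto
    have l: "length (sq E q') = q'" "length (tq E q') = q'" using sqtq[OF assms] by auto
    show ?thesis
    proof (intro allI impI)
      fix k assume "k \<le> q"
      show "(take k (sq E q), take k (tq E q)) \<in> generated_tree E"
      proof (cases "k \<le> q'")
        case True
        then show ?thesis using less.IH[OF q'(1)] q' l by simp
      next
        case False
        then obtain d where d: "k = Suc q' + d" by (metis add_Suc less_imp_Suc_add not_le)
        then show ?thesis using q' l gen_in[of E q' "take d w"] by simp
      qed
    qed
  qed
qed

lemma is_tree:
  assumes "is_test E"
  shows "is_tree_22 (generated_tree E)"
  unfolding is_tree_22_def
proof (intro ballI, clarify)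
  fix s t assume st: "(s, t) \<in> generated_tree E"
  show "length s = length t \<and> (\<forall>k\<le>length s. (take k s, take k t) \<in> generated_tree E)"
  proof (cases "s = [] \<and> t = []")
    case True then show ?thesis using gen_nil by simp
  next
    case False
    then obtain q w where e: "s = sq E q @ [False] @ w" "t = tq E q @ [True] @ w"
      using st unfolding generated_tree_def by blast
    have l: "length (sq E q) = q" "length (tq E q) = q" using sqtq[OF assms] by auto
    have "\<forall>k\<le>length s. (take k s, take k t) \<in> generated_tree E"
    proof (intro allI impI)
      fix k assume "k \<le> length s"
      show "(take k s, take k t) \<in> generated_tree E"
      proof (cases "k \<le> q")
        case True
        then show ?thesis using prefix_sq[OF assms, of q] e l by simp
      next
        case False
        then obtain d where d: "k = Suc q + d" by (metis add_Suc less_imp_Suc_add not_le)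
        then show ?thesis using e l gen_in[of E q "take d w"] by simp
      qed
    qed
    then show ?thesis using e l by simp
  qed
qed

lemma level_class:
  assumes "is_test E" "(s, t) \<in> generated_tree E" "length s = Suc p"
  shows "(s = sq E p @ [False] \<and> t = tq E p @ [True]) \<or>
         (\<exists>s' t' a. s = s' @ [a] \<and> t = t' @ [a] \<and> (s', t') \<in> generated_tree E \<and> length s' = p)"
proof -
  obtain q w where e: "s = sq E q @ [False] @ w" "t = tq E q @ [True] @ w"
    using assms(2,3) unfolding generated_tree_def by auto
  have l: "length (sq E q) = q" "length (tq E q) = q" using sqtq[OF assms(1)] by auto
  show ?thesis
  proof (cases "w = []")
    case True
    then have "q = p" using e l assms(3) by simp
    then show ?thesis using e True by simp
  next
    case False
    then obtain w' a where w: "w = w' @ [a]" by (metis rev_exhaust)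
    have "s = (sq E q @ [False] @ w') @ [a] \<and> t = (tq E q @ [True] @ w') @ [a] \<and>
       (sq E q @ [False] @ w', tq E q @ [True] @ w') \<in> generated_tree E \<and> length (sq E q @ [False] @ w') = p"
      using e w l assms(3) gen_in[of E q w'] by auto
    then show ?thesis by blast
  qed
qed

lemma modsuc: "i < (n::nat) \<Longrightarrow> (i + 1) mod n = (if i + 1 = n then 0 else i + 1)"
  by auto

lemma rot:
  fixes h :: "nat \<Rightarrow> 'b"
  assumes "i < n" "\<forall>j<n. j \<noteq> i \<longrightarrow> h j = h ((j + 1) mod n)"
  shows "h i = h ((i + 1) mod n)"
proof -
  have A: "k \<le> i \<Longrightarrow> h 0 = h k" for k
  proof (induction k)
    case (Suc k)
    then have "h k = h ((k+1) mod n)" using assms by auto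
    moreover have "(k+1) mod n = Suc k" using Suc.prems assms(1) by simp
    ultimately show ?case using Suc by simp
  qed simp
  show ?thesis
  proof (cases "i + 1 = n")
    case True
    then show ?thesis using A[of i] by simp
  next
    case False
    have B: "\<forall>k. n - 1 - k = d \<and> i < k \<and> k < n \<longrightarrow> h k = h (n - 1)" for d
    proof (induction d)
      case 0
      show ?case
      proof (intro allI impI)
        fix k assume k: "n - 1 - k = 0 \<and> i < k \<and> k < n"
        then have "k = n - 1" by arith
        then show "h k = h (n - 1)" by simp
      qed
    next
      case (Suc d)
      show ?case
      proof (intro allI impI)
        fix k assume k: "n - 1 - k = Suc d \<and> i < k \<and> k < n"
        have kn: "k + 1 < n" using k by arith
        have "h k = h ((k+1) mod n)" using assms(2) k by simp
        moreover have "(k+1) mod n = k + 1" using kn by simp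
        moreover have "n - 1 - (k + 1) = d" using k by arith
        then have "h (k+1) = h (n-1)" using Suc.IH kn k by simp
        ultimately show "h k = h (n-1)" by simp
      qed
    qed
    have i1: "i + 1 < n" using False assms(1) by arith
    have "h (i+1) = h (n-1)" using spec[OF B[of "n - 1 - (i+1)"], of "i+1"] i1 by simp
    moreover have "h (n-1) = h 0"
    proof -
      have n1: "n - 1 < n" "n - 1 \<noteq> i" using i1 by arith+
      have "(n - 1 + 1) mod n = 0" using n1 by simp
      then show ?thesis using assms(2) n1 by metis
    qed
    ultimately show ?thesis using A[of i] False assms(1) by simp
  qed
qed


lemma once:
  assumes "distinct cs" "length cs \<ge> 3" "i < length cs" "j < length cs" "i \<noteq> j"
    "{cs ! i, cs ! ((i+1) mod length cs)} = {cs ! j, cs ! ((j+1) mod length cs)}"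
  shows False
proof -
  define n where "n = length cs"
  define i' where "i' = (i+1) mod n"
  define j' where "j' = (j+1) mod n"
  have n3: "n \<ge> 3" using assms(2) n_def by simp
  have iv: "i' = (if i + 1 = n then 0 else i + 1)" using modsuc[of i n] assms(3) i'_def n_def by simp
  have jv: "j' = (if j + 1 = n then 0 else j + 1)" using modsuc[of j n] assms(4) j'_def n_def by simp
  have il: "i < n" "j < n" using assms n_def by auto
  have ni: "i' < n" "j' < n" using iv jv il n3 by auto
  have inj: "\<And>a b. a < n \<Longrightarrow> b < n \<Longrightarrow> cs ! a = cs ! b \<Longrightarrow> a = b"
    using assms(1) nth_eq_iff_index_eq n_def by blast
  have e: "{cs ! i, cs ! i'} = {cs ! j, cs ! j'}" using assms(6) i'_def j'_def n_def by simp
  have "cs ! i = cs ! j \<or> cs ! i = cs ! j'" using e by (metis insertCI insertE singletonD)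
  moreover have "cs ! i \<noteq> cs ! j" using inj il assms(5) by blast
  ultimately have "cs ! i = cs ! j'" by blast
  then have ij: "i = j'" using inj ni il by blast
  have "cs ! i' = cs ! j \<or> cs ! i' = cs ! j'" using e by (metis insertCI insertE singletonD)
  moreover have "i' \<noteq> i" using iv n3 by (cases "i + 1 = n") simp_all
  then have "cs ! i' \<noteq> cs ! i" using inj il ni by blast
  ultimately have "cs ! i' = cs ! j" using ij by simp
  then have ji: "j = i'" using inj ni il by metis
  show False
  proof (cases "j + 1 = n")
    case True
    then have "i = 0" using ij jv by simp
    then have "i' = 1" using iv n3 by simp
    then show False using ji True n3 by simp
  next
    case False
    then have "i = j + 1" using ij jv by simp
    then show False using ji iv n3 by (cases "i + 1 = n") simp_all
  qed
qed

lemma acyc: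
  assumes "is_test E"
  shows "ugraph_acyclic (level_edges (generated_tree E) p)"
proof (induction p)
  case 0
  show ?case unfolding ugraph_acyclic_def
  proof
    assume "\<exists>cs. 3 \<le> length cs \<and> distinct cs \<and>
      (\<forall>i<length cs. {cs ! i, cs ! ((i + 1) mod length cs)} \<in> level_edges (generated_tree E) 0)"
    then obtain cs where cs: "3 \<le> length cs" "distinct cs"
      "\<forall>i<length cs. {cs ! i, cs ! ((i + 1) mod length cs)} \<in> level_edges (generated_tree E) 0"
      by blast
    have sub: "set cs \<subseteq> {([], False), ([], True)}"
    proof
      fix v assume "v \<in> set cs"
      then obtain i where i: "i < length cs" "v = cs ! i" by (metis in_set_conv_nth)
      then have "{cs ! i, cs ! ((i + 1) mod length cs)} \<in> level_edges (generated_tree E) 0"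
        using cs by blast
      then obtain s t where st: "{cs ! i, cs ! ((i + 1) mod length cs)} = {(s, False), (t, True)}"
        "length s = 0" "length t = 0" unfolding level_edges_def by blast
      have "v \<in> {(s, False), (t, True)}" using st(1) i(2) by (metis insertCI)
      then show "v \<in> {([], False), ([], True)}" using st(2,3) by simp
    qed
    have "card {([]::bool list, False), ([], True)} = 2" by simp
    then have "card (set cs) \<le> 2" using card_mono[OF _ sub] by simp
    then show False using cs(1) distinct_card[OF cs(2)] by simp
  qed
next
  case (Suc p)
  let ?T = "generated_tree E"
  show ?case unfolding ugraph_acyclic_def
  proof
    assume "\<exists>cs. 3 \<le> length cs \<and> distinct cs \<and>
      (\<forall>i<length cs. {cs ! i, cs ! ((i + 1) mod length cs)} \<in> level_edges ?T (Suc p))"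
    then obtain cs where cs: "3 \<le> length cs" "distinct cs"
      "\<forall>i<length cs. {cs ! i, cs ! ((i + 1) mod length cs)} \<in> level_edges ?T (Suc p)"
      by blast
    define n where "n = length cs"
    define B where "B = {(sq E p @ [False], False), (tq E p @ [True], True)}"
    define f where "f = (\<lambda>v::bool list \<times> bool. last (fst v))"
    define g where "g = (\<lambda>v::bool list \<times> bool. (butlast (fst v), snd v))"
    have n3: "3 \<le> n" using cs(1) n_def by simp
    have npos: "0 < n" using n3 by arith
    have nx: "\<And>i. i < n \<Longrightarrow> (i+1) mod n < n" using npos by simp
    have nxne: "\<And>i. i < n \<Longrightarrow> (i+1) mod n \<noteq> i"
    proof -
      fix i assume i: "i < n"
      show "(i+1) mod n \<noteq> i" using modsuc[OF i] n3 by (cases "i + 1 = n") simp_all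
    qed
    have injn: "\<And>a b. a < n \<Longrightarrow> b < n \<Longrightarrow> cs ! a = cs ! b \<Longrightarrow> a = b"
      using cs(2) nth_eq_iff_index_eq n_def by blast
    have edge: "\<And>i. i < n \<Longrightarrow> \<exists>s t. {cs ! i, cs ! ((i+1) mod n)} = {(s, False), (t, True)} \<and>
        (s, t) \<in> ?T \<and> length s = Suc p \<and> length t = Suc p"
    proof -
      fix i assume "i < n"
      then have "{cs ! i, cs ! ((i+1) mod n)} \<in> level_edges ?T (Suc p)" using cs(3) n_def by simp
      then show "\<exists>s t. {cs ! i, cs ! ((i+1) mod n)} = {(s, False), (t, True)} \<and>
        (s, t) \<in> ?T \<and> length s = Suc p \<and> length t = Suc p" unfolding level_edges_def by blast
    qed
    have lens: "\<And>i. i < n \<Longrightarrow> length (fst (cs ! i)) = Suc p"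
    proof -
      fix i assume i: "i < n"
      obtain s t where st: "{cs ! i, cs ! ((i+1) mod n)} = {(s, False), (t, True)}"
        "length s = Suc p" "length t = Suc p" using edge[OF i] by blast
      have "cs ! i \<in> {(s, False), (t, True)}" using st(1) by (metis insertCI)
      then have "cs ! i = (s, False) \<or> cs ! i = (t, True)" by blast
      then show "length (fst (cs ! i)) = Suc p" using st(2,3) by (cases "cs ! i = (s, False)") simp_all
    qed
    have br: "\<And>i. i < n \<Longrightarrow> {cs ! i, cs ! ((i+1) mod n)} = B \<Longrightarrow> f (cs ! i) \<noteq> f (cs ! ((i+1) mod n))"
    proof
      fix i assume i: "i < n" and b: "{cs ! i, cs ! ((i+1) mod n)} = B"
        and e: "f (cs ! i) = f (cs ! ((i+1) mod n))"
      have 1: "f ` {cs ! i, cs ! ((i+1) mod n)} = {f (cs ! i)}" using e by simp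
      have 2: "f ` B = {False, True}" unfolding B_def f_def by simp
      have 3: "f ` B = {f (cs ! i)}" using 1 by (simp only: b)
      have "{f (cs ! i)} = {False, True}" using 2 3 by metis
      then show False by (metis insert_iff singletonD)
    qed
    have nb: "\<And>i. i < n \<Longrightarrow> {cs ! i, cs ! ((i+1) mod n)} \<noteq> B \<Longrightarrow>
        f (cs ! i) = f (cs ! ((i+1) mod n)) \<and>
        {g (cs ! i), g (cs ! ((i+1) mod n))} \<in> level_edges ?T p"
    proof -
      fix i assume i: "i < n" and b: "{cs ! i, cs ! ((i+1) mod n)} \<noteq> B"
      obtain s t where st: "{cs ! i, cs ! ((i+1) mod n)} = {(s, False), (t, True)}"
        "(s, t) \<in> ?T" "length s = Suc p" "length t = Suc p" using edge[OF i] by blast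
      have "\<not> (s = sq E p @ [False] \<and> t = tq E p @ [True])"
      proof
        assume h: "s = sq E p @ [False] \<and> t = tq E p @ [True]"
        then have "{cs ! i, cs ! ((i+1) mod n)} = B" using st(1) unfolding B_def by simp
        then show False using b by blast
      qed
      then obtain s' t' a where sta: "s = s' @ [a]" "t = t' @ [a]" "(s', t') \<in> ?T" "length s' = p"
        using level_class[OF assms st(2) st(3)] by blast
      have lt: "length t' = p" using sta(2) st(4) by simp
      have "f ` {cs ! i, cs ! ((i+1) mod n)} = {a}" using st(1) sta unfolding f_def by simp
      then have 1: "f (cs ! i) = f (cs ! ((i+1) mod n))" by blast
      have "g ` {cs ! i, cs ! ((i+1) mod n)} = {(s', False), (t', True)}" using st(1) sta unfolding g_def by simp
      then have "{g (cs ! i), g (cs ! ((i+1) mod n))} = {(s', False), (t', True)}" by simp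
      then have "{g (cs ! i), g (cs ! ((i+1) mod n))} \<in> level_edges ?T p"
        unfolding level_edges_def using sta(3,4) lt by blast
      then show "f (cs ! i) = f (cs ! ((i+1) mod n)) \<and>
        {g (cs ! i), g (cs ! ((i+1) mod n))} \<in> level_edges ?T p" using 1 by blast
    qed
    show False
    proof (cases "\<exists>i<n. {cs ! i, cs ! ((i+1) mod n)} = B")
      case True
      then obtain i where i: "i < n" "{cs ! i, cs ! ((i+1) mod n)} = B" by blast
      have "\<forall>j<n. j \<noteq> i \<longrightarrow> f (cs ! j) = f (cs ! ((j+1) mod n))"
      proof (intro allI impI)
        fix j assume j: "j < n" "j \<noteq> i"
        have "{cs ! j, cs ! ((j+1) mod n)} \<noteq> B"
        proof
          assume "{cs ! j, cs ! ((j+1) mod n)} = B"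
          then have eq: "{cs ! i, cs ! ((i+1) mod length cs)} = {cs ! j, cs ! ((j+1) mod length cs)}"
            using i(2) n_def by simp
          have il: "i < length cs" "j < length cs" using i(1) j(1) n_def by simp_all
          have ne: "i \<noteq> j" using j(2) by simp
          show False using once[OF cs(2) cs(1) il(1) il(2) ne eq] .
        qed
        then show "f (cs ! j) = f (cs ! ((j+1) mod n))" using nb j(1) by blast
      qed
      then have "f (cs ! i) = f (cs ! ((i+1) mod n))" using rot[of i n "\<lambda>k. f (cs ! k)"] i(1) by blast
      then show False using br i by blast
    next
      case False
      then have nb': "\<And>i. i < n \<Longrightarrow> f (cs ! i) = f (cs ! ((i+1) mod n)) \<and>
        {g (cs ! i), g (cs ! ((i+1) mod n))} \<in> level_edges ?T p" using nb by blast
      have feq: "k < n \<Longrightarrow> f (cs ! k) = f (cs ! 0)" for k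
      proof (induction k)
        case (Suc k)
        have kn: "k < n" using Suc.prems by simp
        have "f (cs ! k) = f (cs ! ((k+1) mod n))" using nb'[OF kn] by blast
        moreover have "(k+1) mod n = Suc k" using Suc.prems by simp
        ultimately show ?case using Suc.IH kn by simp
      qed simp
      have inj: "inj_on g (set cs)"
      proof
        fix v w assume v: "v \<in> set cs" and w: "w \<in> set cs" and e: "g v = g w"
        obtain a where a: "a < n" "v = cs ! a" using v unfolding n_def in_set_conv_nth by blast
        obtain b where b: "b < n" "w = cs ! b" using w unfolding n_def in_set_conv_nth by blast
        have "length (fst v) = Suc p" "length (fst w) = Suc p" using lens a b by simp_all
        then have ne: "fst v \<noteq> []" "fst w \<noteq> []" by auto
        have "f v = f (cs ! 0)" using feq[OF a(1)] a(2) by simp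
        moreover have "f w = f (cs ! 0)" using feq[OF b(1)] b(2) by simp
        ultimately have "f v = f w" by simp
        then have la: "last (fst v) = last (fst w)" unfolding f_def by simp
        have bl: "butlast (fst v) = butlast (fst w)" using e unfolding g_def by simp
        have "fst v = butlast (fst v) @ [last (fst v)]" using append_butlast_last_id[OF ne(1)] by simp
        also have "\<dots> = butlast (fst w) @ [last (fst w)]" using la bl by simp
        also have "\<dots> = fst w" using append_butlast_last_id[OF ne(2)] by simp
        finally have "fst v = fst w" .
        moreover have "snd v = snd w" using e unfolding g_def by simp
        ultimately show "v = w" by (simp add: prod_eq_iff)
      qed
      define cs' where "cs' = map g cs"
      have l': "length cs' = n" unfolding cs'_def n_def by simp
      have d': "distinct cs'" unfolding cs'_def using cs(2) inj by (simp add: distinct_map)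
      have e': "\<forall>i<length cs'. {cs' ! i, cs' ! ((i + 1) mod length cs')} \<in> level_edges ?T p"
      proof (intro allI impI)
        fix i assume "i < length cs'"
        then have i: "i < n" using l' by simp
        have "cs' ! i = g (cs ! i)" using i unfolding cs'_def n_def by simp
        moreover have "cs' ! ((i + 1) mod n) = g (cs ! ((i + 1) mod n))"
          using nx[OF i] unfolding cs'_def n_def by simp
        ultimately show "{cs' ! i, cs' ! ((i + 1) mod length cs')} \<in> level_edges ?T p"
          using nb'[OF i] l' by simp
      qed
      have "3 \<le> length cs'" using l' n3 by simp
      then show False using d' e' Suc.IH unfolding ugraph_acyclic_def by blast
    qed
  qed
qed

theorem proposition3p2:
  assumes "is_test E"
  shows "is_tree_22 (generated_tree E) \<and> has_acyclic_levels (generated_tree E)"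
  using is_tree[OF assms] acyc[OF assms] unfolding has_acyclic_levels_def by blast

end
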